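(* Let $n\geq2$ and let $U\in F(J(P_n)^2)\setminus G(J(P_n)^2)$. Then there exists $V\in G(J(P_n)^2)$ such that $V>_{\mathcal R}U$ and $V$ divides $U$.
   Context: Let $K$ be a field. For $m\geq 1$, $P_m$ is the path graph on vertices $x_1,\ldots,x_m$ with edges $\{x_i,x_{i+1}\}$. The cover ideal $J(P_m)$ is generated by the monomials $\prod_{x\in C}x$ with $C$ a minimal vertex cover of $P_m$. For a monomial ideal $I$, $G(I)$ is its set of minimal monomial generators and $F(I^2)=\{uv:u,v\in G(I)\}$. The rooted list $\mathcal R(P_m)$ is defined recursively: $\mathcal R(P_1)$ empty; $\mathcal R(P_2)=x_1,x_2$; $\mathcal R(P_3)=x_2,x_1x_3$; $\mathcal R(P_4)=x_1x_3,x_2x_3,x_2x_4$; for $m\geq5$, if $\mathcal R(P_{m-2})=u_1,\ldots,u_r$ and $\mathcal R(P_{m-3})=v_1,\ldots,v_s$, then $\mathcal R(P_m)=x_{m-1}u_1,\ldots,x_{m-1}u_r,x_mx_{m-2}v_1,\ldots,x_mx_{m-2}v_s$; it lists each element of $G(J(P_m))$ once. With $\mathcal R(P_m)=u_1,\ldots,u_q$, each $M\in F(J(P_m)^2)$ can be written $u_1^{a_1}\cdots u_q^{a_q}$ with $a_i\geq0$, $\sum a_i=2$; the maximal expression of $M$ is the one with lexicographically largest exponent vector. The rooted order on $F(J(P_m)^2)$: $M>_{\mathcal R}N$ iff the exponent vector of the maximal expression of $M$ is lexicographically larger than that of $N$. *)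

theory Defs
  imports Main "HOL-Library.Multiset" "HOL-Library.List_Lexorder"
begin

(* Monomials in x_1,...,x_m are represented as multisets of variable indices:
   the monomial x_1^{e_1}...x_m^{e_m} is the multiset with count i = e_i.
   Monomial multiplication is multiset sum (+), divisibility is (\<subseteq>#). *)

definition is_vertex_cover :: "nat \<Rightarrow> nat set \<Rightarrow> bool" where
  "is_vertex_cover m C \<longleftrightarrow> C \<subseteq> {1..m} \<and> (\<forall>i. 1 \<le> i \<and> i < m \<longrightarrow> i \<in> C \<or> Suc i \<in> C)"

definition is_min_vertex_cover :: "nat \<Rightarrow> nat set \<Rightarrow> bool" where
  "is_min_vertex_cover m C \<longleftrightarrow> is_vertex_cover m C \<and> (\<forall>D. D \<subset> C \<longrightarrow> \<not> is_vertex_cover m D)"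

text \<open>G(J(P_m)): minimal monomial generators of the cover ideal of the path P_m.\<close>
definition GJ :: "nat \<Rightarrow> nat multiset set" where
  "GJ m = {mset_set C | C. is_min_vertex_cover m C}"

definition FJ2 :: "nat \<Rightarrow> nat multiset set" where
  "FJ2 m = {u + v | u v. u \<in> GJ m \<and> v \<in> GJ m}"

definition GJ2 :: "nat \<Rightarrow> nat multiset set" where
  "GJ2 m = {M \<in> FJ2 m. \<forall>N \<in> FJ2 m. N \<subseteq># M \<longrightarrow> N = M}"

fun rooted_list :: "nat \<Rightarrow> nat multiset list" where
  "rooted_list 0 = []"
| "rooted_list (Suc 0) = []"
| "rooted_list (Suc (Suc 0)) = [{#1#}, {#2#}]"
| "rooted_list (Suc (Suc (Suc 0))) = [{#2#}, {#1, 3#}]"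
| "rooted_list (Suc (Suc (Suc (Suc 0)))) = [{#1, 3#}, {#2, 3#}, {#2, 4#}]"
| "rooted_list (Suc (Suc (Suc (Suc (Suc k))))) =
     map (\<lambda>u. add_mset (k + 4) u) (rooted_list (k + 3)) @
     map (\<lambda>v. add_mset (k + 5) (add_mset (k + 3) v)) (rooted_list (k + 2))"

text \<open>Expressions M = u_1^{a_1}...u_q^{a_q} with sum a_i = 2, as exponent vectors (lists).\<close>
definition expressions :: "nat \<Rightarrow> nat multiset \<Rightarrow> nat list set" where
  "expressions m M = {a. length a = length (rooted_list m) \<and> sum_list a = 2 \<and>
      (\<Sum>i<length (rooted_list m). repeat_mset (a ! i) (rooted_list m ! i)) = M}"

text \<open>Maximal expression: lexicographically largest exponent vector
  (List_Lexorder gives the lexicographic order on lists; all vectors have equal length).\<close>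
definition max_expression :: "nat \<Rightarrow> nat multiset \<Rightarrow> nat list" where
  "max_expression m M = Max (expressions m M)"

definition rooted_gt :: "nat \<Rightarrow> nat multiset \<Rightarrow> nat multiset \<Rightarrow> bool" where
  "rooted_gt m M N \<longleftrightarrow> max_expression m M > max_expression m N"

end

theory Submission
  imports Defs
begin


definition mvc :: "nat \<Rightarrow> nat set \<Rightarrow> bool" where
 "mvc m C \<longleftrightarrow> C \<subseteq> {1..m} \<and> (\<forall>i. 1 \<le> i \<and> i < m \<longrightarrow> i \<in> C \<or> Suc i \<in> C)
    \<and> (\<forall>i\<in>C. (1 < i \<and> i - 1 \<notin> C) \<or> (i < m \<and> Suc i \<notin> C))"

lemma min_vc_iff: "is_min_vertex_cover m C \<longleftrightarrow> mvc m C"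
proof
  assume H: "is_min_vertex_cover m C"
  hence vc: "is_vertex_cover m C" by (simp add: is_min_vertex_cover_def)
  have "(1 < i \<and> i - 1 \<notin> C) \<or> (i < m \<and> Suc i \<notin> C)" if "i \<in> C" for i
  proof -
    have "\<not> is_vertex_cover m (C - {i})" using H that unfolding is_min_vertex_cover_def by blast
    then obtain j where j: "1 \<le> j" "j < m" "j \<notin> C - {i}" "Suc j \<notin> C - {i}"
      using vc unfolding is_vertex_cover_def by blast
    have "j \<in> C \<or> Suc j \<in> C" using vc j unfolding is_vertex_cover_def by blast
    then show ?thesis using j by (cases "j = i") auto
  qed
  then show "mvc m C" using vc unfolding mvc_def is_vertex_cover_def by blast
next
  assume H: "mvc m C"
  have vc: "is_vertex_cover m C" using H unfolding mvc_def is_vertex_cover_def by blast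
  have "\<not> is_vertex_cover m D" if DC: "D \<subset> C" for D
  proof
    assume vD: "is_vertex_cover m D"
    obtain i where i: "i \<in> C" "i \<notin> D" using DC by blast
    then have "(1 < i \<and> i - 1 \<notin> C) \<or> (i < m \<and> Suc i \<notin> C)" using H unfolding mvc_def by blast
    then show False
    proof
      assume a: "1 < i \<and> i - 1 \<notin> C"
      have "i \<le> m" using H i unfolding mvc_def by auto
      then have "1 \<le> i - 1 \<and> i - 1 < m" using a by auto
      then have "i - 1 \<in> D \<or> Suc (i - 1) \<in> D" using vD unfolding is_vertex_cover_def by blast
      then show False using a i DC by auto
    next
      assume a: "i < m \<and> Suc i \<notin> C"
      have "1 \<le> i" using H i unfolding mvc_def by auto
      then have "i \<in> D \<or> Suc i \<in> D" using vD a unfolding is_vertex_cover_def by blast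
      then show False using a i DC by auto
    qed
  qed
  then show "is_min_vertex_cover m C" using vc unfolding is_min_vertex_cover_def by blast
qed

lemma mvc_sub: "mvc m P \<Longrightarrow> t \<in> P \<Longrightarrow> 1 \<le> t \<and> t \<le> m"
  unfolding mvc_def by auto
lemma mvc_edge: "mvc m P \<Longrightarrow> 1 \<le> i \<Longrightarrow> i < m \<Longrightarrow> i \<in> P \<or> Suc i \<in> P"
  unfolding mvc_def by auto
lemma mvc_min: "mvc m P \<Longrightarrow> t \<in> P \<Longrightarrow> (1 < t \<and> t - 1 \<notin> P) \<or> (t < m \<and> Suc t \<notin> P)"
  unfolding mvc_def by auto
lemma mvc_fin: "mvc m P \<Longrightarrow> finite P"
  unfolding mvc_def using finite_subset by blast

definition colex :: "nat set \<Rightarrow> nat set \<Rightarrow> bool" where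
  "colex S T \<longleftrightarrow> (\<exists>k. k \<in> T \<and> k \<notin> S \<and> (\<forall>j>k. j \<in> S \<longleftrightarrow> j \<in> T))"

lemma colex_irrefl: "\<not> colex S S" unfolding colex_def by blast

lemma colex_trans: assumes "colex S T" "colex T R" shows "colex S R"
proof -
  obtain k1 where k1: "k1 \<in> T" "k1 \<notin> S" "\<forall>j>k1. j \<in> S \<longleftrightarrow> j \<in> T" using assms(1) colex_def by blast
  obtain k2 where k2: "k2 \<in> R" "k2 \<notin> T" "\<forall>j>k2. j \<in> T \<longleftrightarrow> j \<in> R" using assms(2) colex_def by blast
  show ?thesis
  proof (cases "k1 < k2")
    case True
    then show ?thesis unfolding colex_def using k1 k2 by (intro exI[of _ k2]) auto
  next
    case False
    then have "k2 < k1" using k1 k2 by (metis nat_neq_iff)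
    then show ?thesis unfolding colex_def using k1 k2 by (intro exI[of _ k1]) auto
  qed
qed

lemma colex_asym: "colex S T \<Longrightarrow> \<not> colex T S"
  using colex_trans colex_irrefl by blast

lemma colex_total: assumes "finite S" "finite T" "S \<noteq> T" shows "colex S T \<or> colex T S"
proof -
  let ?D = "(S - T) \<union> (T - S)"
  have fin: "finite ?D" using assms by auto
  have ne: "?D \<noteq> {}" using assms(3) by blast
  let ?k = "Max ?D"
  have kD: "?k \<in> ?D" using Max_in[OF fin ne] .
  have above: "\<forall>j>?k. j \<in> S \<longleftrightarrow> j \<in> T" using Max_ge[OF fin] by (meson UnI1 UnI2 DiffI leD)
  show ?thesis using kD above unfolding colex_def by blast
qed

definition sp :: "nat set \<Rightarrow> nat set \<Rightarrow> nat \<Rightarrow> nat set" where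
  "sp P Q k = {t \<in> P. t \<le> k} \<union> {t \<in> Q. k < t}"

lemma sp_mvc:
  assumes P: "mvc m P" and Q: "mvc m Q" and k: "1 \<le> k" "k < m" and d: "(k \<in> P) \<noteq> (Suc k \<in> Q)"
  shows "mvc m (sp P Q k)"
proof -
  have s: "sp P Q k \<subseteq> {1..m}" using P Q unfolding sp_def mvc_def by auto
  have e: "i \<in> sp P Q k \<or> Suc i \<in> sp P Q k" if "1 \<le> i" "i < m" for i
  proof -
    consider "Suc i \<le> k" | "i = k" | "k < i" by linarith
    then show ?thesis
    proof cases
      case 1 then show ?thesis using mvc_edge[OF P that] unfolding sp_def by auto
    next
      case 2 then show ?thesis using d unfolding sp_def by auto
    next
      case 3 then show ?thesis using mvc_edge[OF Q that] unfolding sp_def by auto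
    qed
  qed
  have mn: "(1 < t \<and> t - 1 \<notin> sp P Q k) \<or> (t < m \<and> Suc t \<notin> sp P Q k)" if t: "t \<in> sp P Q k" for t
  proof -
    consider "t < k" | "t = k" | "t = Suc k" | "Suc k < t" by linarith
    then show ?thesis
    proof cases
      case 1
      then have "t \<in> P" using t unfolding sp_def by auto
      then show ?thesis using mvc_min[OF P, of t] 1 unfolding sp_def by auto
    next
      case 2
      then have "t \<in> P" using t unfolding sp_def by auto
      then show ?thesis using 2 d k unfolding sp_def by auto
    next
      case 3
      then have "t \<in> Q" using t unfolding sp_def by auto
      then show ?thesis using 3 d k unfolding sp_def by auto
    next
      case 4
      then have "t \<in> Q" using t unfolding sp_def by auto
      then show ?thesis using mvc_min[OF Q, of t] 4 unfolding sp_def by auto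
    qed
  qed
  show ?thesis using s e mn unfolding mvc_def by blast
qed

definition ind :: "nat set \<Rightarrow> nat \<Rightarrow> nat" where
  "ind S t = (if t \<in> S then 1 else 0)"

lemma sp_sum:
  assumes "\<forall>t>k. ind A t + ind B t = ind C t + ind D t"
  shows "ind (sp X A k) t + ind (sp Y B k) t = (if t \<le> k then ind X t + ind Y t else ind C t + ind D t)"
  using assms unfolding sp_def ind_def by (auto split: if_splits)

lemma key:
  assumes A: "mvc m A" and B: "mvc m B" and C: "mvc m C" and D: "mvc m D"
    and le: "\<forall>t. ind C t + ind D t \<le> ind A t + ind B t"
    and ne: "\<exists>t. ind C t + ind D t \<noteq> ind A t + ind B t"
  shows "\<exists>C' D'. mvc m C' \<and> mvc m D' \<and> (\<forall>t. ind C' t + ind D' t = ind C t + ind D t) \<and> colex C' A"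
proof -
  let ?Dif = "{t. ind C t + ind D t \<noteq> ind A t + ind B t}"
  have sub: "?Dif \<subseteq> {1..m}"
  proof
    fix t assume "t \<in> ?Dif"
    then have "t \<in> A \<or> t \<in> B \<or> t \<in> C \<or> t \<in> D" unfolding ind_def by (auto split: if_splits)
    then show "t \<in> {1..m}" using mvc_sub[OF A] mvc_sub[OF B] mvc_sub[OF C] mvc_sub[OF D] by auto
  qed
  then have fin: "finite ?Dif" using finite_subset by blast
  have nemp: "?Dif \<noteq> {}" using ne by blast
  define k where "k = Max ?Dif"
  have kD: "k \<in> ?Dif" unfolding k_def using Max_in[OF fin nemp] .
  then have k1: "1 \<le> k" "k \<le> m" using sub by auto
  have hk: "ind C k + ind D k < ind A k + ind B k" using kD le[rule_format, of k] by simp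
  have above: "\<forall>t>k. ind A t + ind B t = ind C t + ind D t"
    using Max_ge[OF fin] unfolding k_def[symmetric] by (metis (mono_tags, lifting) leD mem_Collect_eq)
  have lei: "\<And>t. ind C t + ind D t \<le> ind A t + ind B t" using le by blast
  show ?thesis
  proof (cases "k = m")
    case True
    have s1: "\<not> (m \<in> C \<and> m \<in> D)" using hk True unfolding ind_def by (auto split: if_splits)
    have s2: "m \<notin> C \<and> m \<notin> D"
    proof (rule ccontr)
      assume "\<not> (m \<notin> C \<and> m \<notin> D)"
      then have "m \<in> A \<and> m \<in> B" using hk True s1 unfolding ind_def by (auto split: if_splits)
      then have a: "1 < m \<and> m - 1 \<notin> A" and b: "m - 1 \<notin> B" using mvc_min[OF A, of m] mvc_min[OF B, of m] by auto
      then have "m - 1 \<notin> C \<and> m - 1 \<notin> D" using lei[of "m - 1"] unfolding ind_def by (auto split: if_splits)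
      then have "m \<in> C \<and> m \<in> D" using mvc_edge[OF C, of "m - 1"] mvc_edge[OF D, of "m - 1"] a by auto
      then show False using s1 by blast
    qed
    have s3: "m \<in> A"
    proof (rule ccontr)
      assume nA: "m \<notin> A"
      then have "m \<in> B" using hk True unfolding ind_def by (auto split: if_splits)
      then have a: "1 < m \<and> m - 1 \<notin> B" using mvc_min[OF B, of m] by auto
      then have "m - 1 \<in> A" using mvc_edge[OF A, of "m - 1"] nA by auto
      moreover have "m - 1 \<in> C \<and> m - 1 \<in> D" using mvc_edge[OF C, of "m - 1"] mvc_edge[OF D, of "m - 1"] a s2 by auto
      ultimately show False using lei[of "m - 1"] a unfolding ind_def by (auto split: if_splits)
    qed
    have "colex C A" unfolding colex_def
      using s2 s3 mvc_sub[OF C] mvc_sub[OF A] by (intro exI[of _ m]) (meson leD)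
    then show ?thesis using C D by blast
  next
    case False
    then have km: "k < m" using k1 by simp
    show ?thesis
    proof (cases "k \<notin> C \<and> k \<notin> D")
      case True
      then have c1: "Suc k \<in> C \<and> Suc k \<in> D" using mvc_edge[OF C, of k] mvc_edge[OF D, of k] k1 km by auto
      then have c2: "Suc k \<in> A \<and> Suc k \<in> B" using lei[of "Suc k"] unfolding ind_def by (auto split: if_splits)
      have kA: "k \<in> A"
      proof (rule ccontr)
        assume nA: "k \<notin> A"
        then have "k \<in> B" using hk True unfolding ind_def by (auto split: if_splits)
        then have a: "1 < k \<and> k - 1 \<notin> B" using mvc_min[OF B, of k] c2 by auto
        then have "k - 1 \<in> A" using mvc_edge[OF A, of "k - 1"] nA km by auto
        moreover have "k - 1 \<in> C \<and> k - 1 \<in> D" using mvc_edge[OF C, of "k - 1"] mvc_edge[OF D, of "k - 1"] a True km by auto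
        ultimately show False using lei[of "k - 1"] a unfolding ind_def by (auto split: if_splits)
      qed
      have M1: "mvc m (sp C A k)" using sp_mvc[OF C A k1(1) km] True c2 by auto
      have M2: "mvc m (sp D B k)" using sp_mvc[OF D B k1(1) km] True c2 by auto
      have S: "\<forall>t. ind (sp C A k) t + ind (sp D B k) t = ind C t + ind D t"
        using sp_sum[OF above] by simp
      have "colex (sp C A k) A" unfolding colex_def sp_def
        using kA True by (intro exI[of _ k]) auto
      then show ?thesis using M1 M2 S by blast
    next
      case False
      then have w1: "(k \<in> C) \<noteq> (k \<in> D)" and kAB: "k \<in> A \<and> k \<in> B"
        using hk unfolding ind_def by (auto split: if_splits)
      have x1: "\<not> (Suc k \<notin> A \<and> Suc k \<notin> B)"
      proof
        assume a: "Suc k \<notin> A \<and> Suc k \<notin> B"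
        then have "Suc k \<notin> C \<and> Suc k \<notin> D" using lei[of "Suc k"] unfolding ind_def by (auto split: if_splits)
        then have "k \<in> C \<and> k \<in> D" using mvc_edge[OF C, of k] mvc_edge[OF D, of k] k1 km by auto
        then show False using w1 by blast
      qed
      have x2: "\<not> (Suc k \<in> A \<and> Suc k \<in> B)"
      proof
        assume a: "Suc k \<in> A \<and> Suc k \<in> B"
        then have b: "1 < k \<and> k - 1 \<notin> A \<and> k - 1 \<notin> B" using mvc_min[OF A, of k] mvc_min[OF B, of k] kAB by auto
        then have "k - 1 \<notin> C \<and> k - 1 \<notin> D" using lei[of "k - 1"] unfolding ind_def by (auto split: if_splits)
        then have "k \<in> C \<and> k \<in> D" using mvc_edge[OF C, of "k - 1"] mvc_edge[OF D, of "k - 1"] b km by auto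
        then show False using w1 by blast
      qed
      obtain X Y where XY: "(X = C \<and> Y = D) \<or> (X = D \<and> Y = C)" and kX: "(k \<in> X) \<longleftrightarrow> Suc k \<notin> A"
        using w1 by (metis)
      have X: "mvc m X" and Y: "mvc m Y" using XY C D by auto
      have kY: "(k \<in> Y) \<longleftrightarrow> Suc k \<notin> B" using XY kX w1 x1 x2 by auto
      have M1: "mvc m (sp X A k)" using sp_mvc[OF X A k1(1) km] kX by auto
      have M2: "mvc m (sp Y B k)" using sp_mvc[OF Y B k1(1) km] kY by auto
      have XYs: "ind X t + ind Y t = ind C t + ind D t" for t using XY by auto
      have S: "\<forall>t. ind (sp X A k) t + ind (sp Y B k) t = ind C t + ind D t"
        using sp_sum[OF above] XYs by simp
      have "colex (sp X A k) A"
      proof (cases "k \<in> X")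
        case False
        then show ?thesis unfolding colex_def sp_def
          using kAB by (intro exI[of _ k]) auto
      next
        case True
        then have a1: "Suc k \<notin> A" "Suc k \<in> B" using kX x1 by auto
        then have b: "1 < k \<and> k - 1 \<notin> B" using mvc_min[OF B, of k] kAB by auto
        have "k \<notin> Y" using True XY w1 by auto
        then have "k - 1 \<in> Y" using mvc_edge[OF Y, of "k - 1"] b km by auto
        then have c: "k - 1 \<in> A \<and> k - 1 \<notin> X" using lei[of "k - 1"] b XYs[of "k - 1"] unfolding ind_def by (auto split: if_splits)
        have jk: "\<forall>j. k - 1 < j \<and> j \<le> k \<longrightarrow> j = k" using b by auto
        show ?thesis unfolding colex_def sp_def
          using c True kAB b jk by (intro exI[of _ "k - 1"]) auto
      qed
      then show ?thesis using M1 M2 S by blast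
    qed
  qed
qed



fun RS :: "nat \<Rightarrow> nat set list" where
  "RS 0 = []"
| "RS (Suc 0) = []"
| "RS (Suc (Suc 0)) = [{1}, {2}]"
| "RS (Suc (Suc (Suc 0))) = [{2}, {1, 3}]"
| "RS (Suc (Suc (Suc (Suc 0)))) = [{1, 3}, {2, 3}, {2, 4}]"
| "RS (Suc (Suc (Suc (Suc (Suc k))))) =
     map (\<lambda>u. insert (k + 4) u) (RS (k + 3)) @
     map (\<lambda>v. insert (k + 5) (insert (k + 3) v)) (RS (k + 2))"

lemma RS_sub: "S \<in> set (RS m) \<Longrightarrow> S \<subseteq> {1..m}"
proof (induction m arbitrary: S rule: RS.induct)
  case (6 k)
  then show ?case by (auto simp: numeral_eq_Suc) (fastforce+)
qed auto

lemma RS_rooted: "rooted_list m = map mset_set (RS m)"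
proof (induction m rule: RS.induct)
  case (6 k)
  have a: "add_mset (k + 4) (mset_set S) = mset_set (insert (k + 4) S)" if "S \<in> set (RS (k+3))" for S
  proof -
    have "S \<subseteq> {1..k+3}" using RS_sub that by blast
    then have "finite S" "k + 4 \<notin> S" using finite_subset by auto
    then show ?thesis by simp
  qed
  have b: "add_mset (k + 5) (add_mset (k + 3) (mset_set S)) = mset_set (insert (k + 5) (insert (k + 3) S))" if "S \<in> set (RS (k+2))" for S
  proof -
    have "S \<subseteq> {1..k+2}" using RS_sub that by blast
    then have "finite S" "k + 5 \<notin> S" "k + 3 \<notin> S" using finite_subset by auto
    then show ?thesis by simp
  qed
  show ?case using 6 a b by (simp add: numeral_eq_Suc)
qed simp_all




lemma mvc_alt: "mvc m S \<longleftrightarrow> S \<subseteq> {1..m} \<and> (\<forall>i\<in>{1..<m}. i \<in> S \<or> Suc i \<in> S)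
    \<and> (\<forall>i\<in>S. (1 < i \<and> i - 1 \<notin> S) \<or> (i < m \<and> Suc i \<notin> S))"
  unfolding mvc_def by auto
lemma set4: "S \<subseteq> {1,2,3,4::nat} \<Longrightarrow> S = {x. (x=1 \<and> 1\<in>S) \<or> (x=2 \<and> 2\<in>S) \<or> (x=3 \<and> 3\<in>S) \<or> (x=4 \<and> 4\<in>S)}"
  by blast

lemma mvc4: "mvc 4 S \<longleftrightarrow> S = {1,3} \<or> S = {2,3} \<or> S = {2,4}"
proof
  assume H: "mvc 4 S"
  have s: "S \<subseteq> {1,2,3,4}" using H unfolding mvc_def by auto
  have e: "1 \<in> S \<or> 2 \<in> S" "2 \<in> S \<or> 3 \<in> S" "3 \<in> S \<or> 4 \<in> S"
    using mvc_edge[OF H, of 1] mvc_edge[OF H, of 2] mvc_edge[OF H, of 3] by (simp_all add: numeral_eq_Suc)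
  have m1: "1 \<in> S \<Longrightarrow> 2 \<notin> S" using mvc_min[OF H, of 1] by (simp add: numeral_eq_Suc)
  have m4: "4 \<in> S \<Longrightarrow> 3 \<notin> S" using mvc_min[OF H, of 4] by (simp add: numeral_eq_Suc)
  have m2: "2 \<in> S \<Longrightarrow> 1 \<notin> S \<or> 3 \<notin> S" using mvc_min[OF H, of 2] by (simp add: numeral_eq_Suc)
  have m3: "3 \<in> S \<Longrightarrow> 2 \<notin> S \<or> 4 \<notin> S" using mvc_min[OF H, of 3] by (simp add: numeral_eq_Suc)
  have S: "S = {x. (x=1 \<and> 1\<in>S) \<or> (x=2 \<and> 2\<in>S) \<or> (x=3 \<and> 3\<in>S) \<or> (x=4 \<and> 4\<in>S)}" using set4[OF s] .
  show "S = {1,3} \<or> S = {2,3} \<or> S = {2,4}"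
  proof (cases "1 \<in> S")
    case True
    then have "2 \<notin> S" "3 \<in> S" "4 \<notin> S" using m1 e m4 by blast+
    then show ?thesis using True S by auto
  next
    case False
    then have "2 \<in> S" using e by blast
    then show ?thesis
    proof (cases "3 \<in> S")
      case True
      then have "4 \<notin> S" using m4 by blast
      then show ?thesis using True False S \<open>2 \<in> S\<close> by auto
    next
      case F3: False
      then have "4 \<in> S" using e by blast
      then show ?thesis using F3 False S \<open>2 \<in> S\<close> by auto
    qed
  qed
next
  assume "S = {1,3} \<or> S = {2,3} \<or> S = {2,4}"
  then show "mvc 4 S" by (auto simp add: mvc_alt numeral_eq_Suc atLeastLessThanSuc)
qed

lemma mvc2: "mvc 2 S \<longleftrightarrow> S = {1} \<or> S = {2}"
proof
  assume H: "mvc 2 S"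
  have s: "S \<subseteq> {1,2}" using H unfolding mvc_def by auto
  have e: "1 \<in> S \<or> 2 \<in> S" using mvc_edge[OF H, of 1] by (simp add: numeral_eq_Suc)
  have m1: "1 \<in> S \<Longrightarrow> 2 \<notin> S" using mvc_min[OF H, of 1] by (simp add: numeral_eq_Suc)
  show "S = {1} \<or> S = {2}"
  proof (cases "1 \<in> S")
    case True
    then show ?thesis using m1 s by blast
  next
    case False
    then show ?thesis using e s by blast
  qed
next
  assume "S = {1} \<or> S = {2}"
  then show "mvc 2 S" by (auto simp add: mvc_alt numeral_eq_Suc atLeastLessThanSuc)
qed

lemma mvc3: "mvc 3 S \<longleftrightarrow> S = {2} \<or> S = {1,3}"
proof
  assume H: "mvc 3 S"
  have s: "S \<subseteq> {1,2,3}" using H unfolding mvc_def by auto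
  have e: "1 \<in> S \<or> 2 \<in> S" "2 \<in> S \<or> 3 \<in> S"
    using mvc_edge[OF H, of 1] mvc_edge[OF H, of 2] by (simp_all add: numeral_eq_Suc)
  have m1: "1 \<in> S \<Longrightarrow> 2 \<notin> S" using mvc_min[OF H, of 1] by (simp add: numeral_eq_Suc)
  have m3: "3 \<in> S \<Longrightarrow> 2 \<notin> S" using mvc_min[OF H, of 3] by (simp add: numeral_eq_Suc)
  show "S = {2} \<or> S = {1,3}"
  proof (cases "2 \<in> S")
    case True
    then show ?thesis using m1 m3 s by blast
  next
    case False
    then show ?thesis using e s by blast
  qed
next
  assume "S = {2} \<or> S = {1,3}"
  then show "mvc 3 S" by (auto simp add: mvc_alt numeral_eq_Suc atLeastLessThanSuc)
qed



lemma mvc_rec1: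
  assumes H: "mvc (k + 5) C"
  shows "(\<exists>S. mvc (k + 3) S \<and> C = insert (k + 4) S) \<or> (\<exists>S. mvc (k + 2) S \<and> C = insert (k + 5) (insert (k + 3) S))"
proof (cases "k + 5 \<in> C")
  case False
  have "k + 4 \<in> C \<or> Suc (k + 4) \<in> C" using mvc_edge[OF H, of "k+4"] by simp
  moreover have "Suc (k + 4) = k + 5" by simp
  ultimately have a: "k + 4 \<in> C" using False by metis
  let ?S = "C - {k + 4}"
  have sub: "?S \<subseteq> {1..k+3}"
  proof
    fix x assume x: "x \<in> ?S"
    then have "1 \<le> x \<and> x \<le> k + 5" using mvc_sub[OF H] by blast
    moreover have "x \<noteq> k + 5" "x \<noteq> k + 4" using x False by auto
    ultimately show "x \<in> {1..k+3}" by simp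
  qed
  have "mvc (k + 3) ?S" unfolding mvc_def
  proof (intro conjI allI impI ballI sub)
    fix i assume i: "1 \<le> i \<and> i < k + 3"
    then have "i \<in> C \<or> Suc i \<in> C" using mvc_edge[OF H, of i] by simp
    moreover have "i \<noteq> k + 4" "Suc i \<noteq> k + 4" using i by auto
    ultimately show "i \<in> ?S \<or> Suc i \<in> ?S" by blast
  next
    fix i assume i: "i \<in> ?S"
    then have il: "i \<le> k + 3" using sub by auto
    have iC: "i \<in> C" using i by blast
    have "(1 < i \<and> i - 1 \<notin> C) \<or> (i < k + 5 \<and> Suc i \<notin> C)" using mvc_min[OF H iC] .
    then show "(1 < i \<and> i - 1 \<notin> ?S) \<or> (i < k + 3 \<and> Suc i \<notin> ?S)"
    proof
      assume "1 < i \<and> i - 1 \<notin> C" then show ?thesis by blast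
    next
      assume b: "i < k + 5 \<and> Suc i \<notin> C"
      then have "Suc i \<noteq> k + 4" using a by metis
      then have "i < k + 3" using il by simp
      then show ?thesis using b by blast
    qed
  qed
  moreover have "C = insert (k + 4) ?S" using a by blast
  ultimately show ?thesis by blast
next
  case True
  have "(1 < k + 5 \<and> k + 5 - 1 \<notin> C) \<or> (k + 5 < k + 5 \<and> Suc (k + 5) \<notin> C)" using mvc_min[OF H True] .
  then have a: "k + 4 \<notin> C" by (simp add: add.commute)
  have "k + 3 \<in> C \<or> Suc (k + 3) \<in> C" using mvc_edge[OF H, of "k+3"] by simp
  moreover have "Suc (k + 3) = k + 4" by simp
  ultimately have b: "k + 3 \<in> C" using a by metis
  let ?S = "C - {k + 5, k + 3}"
  have sub: "?S \<subseteq> {1..k+2}"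
  proof
    fix x assume x: "x \<in> ?S"
    then have "1 \<le> x \<and> x \<le> k + 5" using mvc_sub[OF H] by blast
    moreover have "x \<noteq> k + 5" "x \<noteq> k + 4" "x \<noteq> k + 3" using x a by auto
    ultimately show "x \<in> {1..k+2}" by simp
  qed
  have "mvc (k + 2) ?S" unfolding mvc_def
  proof (intro conjI allI impI ballI sub)
    fix i assume i: "1 \<le> i \<and> i < k + 2"
    then have "i \<in> C \<or> Suc i \<in> C" using mvc_edge[OF H, of i] by simp
    moreover have "i \<noteq> k + 5" "Suc i \<noteq> k + 5" "i \<noteq> k + 3" "Suc i \<noteq> k + 3" using i by auto
    ultimately show "i \<in> ?S \<or> Suc i \<in> ?S" by blast
  next
    fix i assume i: "i \<in> ?S"
    then have il: "i \<le> k + 2" using sub by auto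
    have iC: "i \<in> C" using i by blast
    have "(1 < i \<and> i - 1 \<notin> C) \<or> (i < k + 5 \<and> Suc i \<notin> C)" using mvc_min[OF H iC] .
    then show "(1 < i \<and> i - 1 \<notin> ?S) \<or> (i < k + 2 \<and> Suc i \<notin> ?S)"
    proof
      assume "1 < i \<and> i - 1 \<notin> C" then show ?thesis by blast
    next
      assume c: "i < k + 5 \<and> Suc i \<notin> C"
      then have "Suc i \<noteq> k + 3" using b by metis
      then have "i < k + 2" using il by simp
      then show ?thesis using c by blast
    qed
  qed
  moreover have "C = insert (k + 5) (insert (k + 3) ?S)" using True b by blast
  ultimately show ?thesis by blast
qed

lemma mvc_rec2a:
  assumes S: "mvc (k + 3) S"
  shows "mvc (k + 5) (insert (k + 4) S)"
  unfolding mvc_def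
proof (intro conjI allI impI ballI)
  show "insert (k + 4) S \<subseteq> {1..k+5}" using mvc_sub[OF S] by fastforce
next
  fix i assume i: "1 \<le> i \<and> i < k + 5"
  show "i \<in> insert (k + 4) S \<or> Suc i \<in> insert (k + 4) S"
  proof (cases "i < k + 3")
    case True
    then show ?thesis using mvc_edge[OF S, of i] i by blast
  next
    case False
    then have "i = k + 3 \<or> i = k + 4" using i by linarith
    then show ?thesis by auto
  qed
next
  fix i assume i: "i \<in> insert (k + 4) S"
  show "(1 < i \<and> i - 1 \<notin> insert (k + 4) S) \<or> (i < k + 5 \<and> Suc i \<notin> insert (k + 4) S)"
  proof (cases "i = k + 4")
    case True
    have "k + 5 \<notin> S" using mvc_sub[OF S] by fastforce
    moreover have "Suc (k + 4) = k + 5" "k + 4 \<noteq> k + 5" by simp_all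
    ultimately have "Suc i \<notin> insert (k + 4) S" using True by (simp add: add.commute)
    then show ?thesis using True by (intro disjI2) simp
  next
    case False
    then have iS: "i \<in> S" using i by blast
    then have il: "i \<le> k + 3" using mvc_sub[OF S] by blast
    have "(1 < i \<and> i - 1 \<notin> S) \<or> (i < k + 3 \<and> Suc i \<notin> S)" using mvc_min[OF S iS] .
    then show ?thesis
    proof
      assume a: "1 < i \<and> i - 1 \<notin> S"
      then have "i - 1 \<noteq> k + 4" using il by linarith
      then show ?thesis using a by blast
    next
      assume a: "i < k + 3 \<and> Suc i \<notin> S"
      then have "Suc i \<noteq> k + 4" by linarith
      then show ?thesis using a by auto
    qed
  qed
qed

lemma mvc_rec2b:
  assumes S: "mvc (k + 2) S"
  shows "mvc (k + 5) (insert (k + 5) (insert (k + 3) S))"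
  unfolding mvc_def
proof (intro conjI allI impI ballI)
  show "insert (k + 5) (insert (k + 3) S) \<subseteq> {1..k+5}" using mvc_sub[OF S] by fastforce
next
  fix i assume i: "1 \<le> i \<and> i < k + 5"
  show "i \<in> insert (k + 5) (insert (k + 3) S) \<or> Suc i \<in> insert (k + 5) (insert (k + 3) S)"
  proof (cases "i < k + 2")
    case True
    then show ?thesis using mvc_edge[OF S, of i] i by blast
  next
    case False
    then have "i = k + 2 \<or> i = k + 3 \<or> i = k + 4" using i by linarith
    then show ?thesis by auto
  qed
next
  fix i assume i: "i \<in> insert (k + 5) (insert (k + 3) S)"
  have n4: "k + 4 \<notin> S" "k + 3 \<notin> S" "k + 5 \<notin> S" using mvc_sub[OF S] by fastforce+
  show "(1 < i \<and> i - 1 \<notin> insert (k + 5) (insert (k + 3) S)) \<or> (i < k + 5 \<and> Suc i \<notin> insert (k + 5) (insert (k + 3) S))"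
  proof (cases "i = k + 5 \<or> i = k + 3")
    case True
    then show ?thesis
    proof
      assume T: "i = k + 5"
      have "k + 5 - 1 = k + 4" "k + 4 \<noteq> k + 5" "k + 4 \<noteq> k + 3" by simp_all
      then have "i - 1 \<notin> insert (k + 5) (insert (k + 3) S)" using n4 T by (simp add: add.commute)
      then show ?thesis using T by (intro disjI1) simp
    next
      assume T: "i = k + 3"
      have "Suc (k + 3) = k + 4" "k + 4 \<noteq> k + 5" "k + 4 \<noteq> k + 3" by simp_all
      then have "Suc i \<notin> insert (k + 5) (insert (k + 3) S)" using n4 T by (simp add: add.commute)
      then show ?thesis using T by (intro disjI2) simp
    qed
  next
    case False
    then have iS: "i \<in> S" using i by blast
    then have il: "i \<le> k + 2" using mvc_sub[OF S] by blast
    have "(1 < i \<and> i - 1 \<notin> S) \<or> (i < k + 2 \<and> Suc i \<notin> S)" using mvc_min[OF S iS] .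
    then show ?thesis
    proof
      assume a: "1 < i \<and> i - 1 \<notin> S"
      then have "i - 1 \<noteq> k + 5" "i - 1 \<noteq> k + 3" using il by linarith+
      then show ?thesis using a by blast
    next
      assume a: "i < k + 2 \<and> Suc i \<notin> S"
      then have "Suc i \<noteq> k + 5" "Suc i \<noteq> k + 3" by linarith+
      then show ?thesis using a by auto
    qed
  qed
qed

lemma RS_set: "2 \<le> m \<Longrightarrow> set (RS m) = {S. mvc m S}"
proof (induction m rule: RS.induct)
  case 3
  then show ?case using mvc2 by (auto simp: numeral_eq_Suc)
next
  case 4
  then show ?case using mvc3 by (auto simp: numeral_eq_Suc)
next
  case 5
  then show ?case using mvc4 by (auto simp: numeral_eq_Suc)
next
  case (6 k)
  have e: "Suc (Suc (Suc (Suc (Suc k)))) = k + 5" by simp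
  have i1: "set (RS (k + 3)) = {S. mvc (k + 3) S}" using 6 by (simp add: numeral_eq_Suc)
  have i2: "set (RS (k + 2)) = {S. mvc (k + 2) S}" using 6 by (simp add: numeral_eq_Suc)
  show ?case unfolding e
  proof (rule set_eqI)
    fix C
    show "C \<in> set (RS (k + 5)) \<longleftrightarrow> C \<in> {S. mvc (k + 5) S}"
      using mvc_rec1[of k C] mvc_rec2a[of k] mvc_rec2b[of k] i1 i2
      by (auto simp: numeral_eq_Suc)
  qed
qed auto



lemma colexI: "k \<in> T \<Longrightarrow> k \<notin> S \<Longrightarrow> (\<forall>j>k. j \<in> S \<longleftrightarrow> j \<in> T) \<Longrightarrow> colex S T"
  unfolding colex_def by blast

lemma colex_insert: assumes "colex S T" "a \<notin> S" "a \<notin> T" shows "colex (insert a S) (insert a T)"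
proof -
  obtain k where k: "k \<in> T" "k \<notin> S" "\<forall>j>k. j \<in> S \<longleftrightarrow> j \<in> T" using assms(1) colex_def by blast
  then have "k \<noteq> a" using assms by blast
  then show ?thesis using k by (intro colexI[of k]) auto
qed

lemma RS_sorted: "sorted_wrt colex (RS m)"
proof (induction m rule: RS.induct)
  case 3
  show ?case by (auto intro!: colexI[of 2])
next
  case 4
  show ?case by (auto intro!: colexI[of 3])
next
  case 5
  have "colex {1, 3} {2, 3}" by (auto intro!: colexI[of 2])
  moreover have "colex {1, 3} {2, 4}" by (auto intro!: colexI[of 4])
  moreover have "colex {2, 3} {2, 4}" by (auto intro!: colexI[of 4])
  ultimately show ?case by (simp add: numeral_eq_Suc)
next
  case (6 k)
  have i1: "sorted_wrt colex (RS (k + 3))" using 6 by (simp add: numeral_eq_Suc)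
  have i2: "sorted_wrt colex (RS (k + 2))" using 6 by (simp add: numeral_eq_Suc)
  have s1: "sorted_wrt colex (map (\<lambda>u. insert (k + 4) u) (RS (k + 3)))"
    unfolding sorted_wrt_map
  proof (rule sorted_wrt_mono_rel[OF _ i1])
    fix x y assume "x \<in> set (RS (k + 3))" "y \<in> set (RS (k + 3))" "colex x y"
    moreover have "k + 4 \<notin> x" "k + 4 \<notin> y" using RS_sub calculation by fastforce+
    ultimately show "colex (insert (k + 4) x) (insert (k + 4) y)" using colex_insert by blast
  qed
  have s2: "sorted_wrt colex (map (\<lambda>v. insert (k + 5) (insert (k + 3) v)) (RS (k + 2)))"
    unfolding sorted_wrt_map
  proof (rule sorted_wrt_mono_rel[OF _ i2])
    fix x y assume "x \<in> set (RS (k + 2))" "y \<in> set (RS (k + 2))" "colex x y"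
    moreover have "k + 3 \<notin> x" "k + 3 \<notin> y" "k + 5 \<notin> x" "k + 5 \<notin> y" using RS_sub calculation by fastforce+
    ultimately have "colex (insert (k + 3) x) (insert (k + 3) y)" using colex_insert by blast
    moreover have "k + 5 \<notin> insert (k + 3) x" "k + 5 \<notin> insert (k + 3) y" using \<open>k + 5 \<notin> x\<close> \<open>k + 5 \<notin> y\<close> by auto
    ultimately show "colex (insert (k + 5) (insert (k + 3) x)) (insert (k + 5) (insert (k + 3) y))"
      using colex_insert by blast
  qed
  have s3: "colex (insert (k + 4) x) (insert (k + 5) (insert (k + 3) y))"
    if "x \<in> set (RS (k + 3))" "y \<in> set (RS (k + 2))" for x y
  proof (rule colexI[of "k + 5"])
    have "x \<subseteq> {1..k+3}" "y \<subseteq> {1..k+2}" using RS_sub that by blast+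
    then show "k + 5 \<notin> insert (k + 4) x" "\<forall>j>k + 5. (j \<in> insert (k + 4) x) = (j \<in> insert (k + 5) (insert (k + 3) y))"
      by auto
  qed simp
  have e: "Suc (Suc (Suc (Suc (Suc k)))) = k + 5" by simp
  show ?case using s1 s2 s3 unfolding RS.simps sorted_wrt_append by (auto simp: numeral_eq_Suc)
qed simp_all



definition vec :: "nat \<Rightarrow> nat \<Rightarrow> nat \<Rightarrow> nat list" where
  "vec q i j = map (\<lambda>t. (if t = i then 1 else 0) + (if t = j then 1 else 0)) [0..<q]"

definition e1 :: "nat \<Rightarrow> nat \<Rightarrow> nat list" where
  "e1 q j = map (\<lambda>t. if t = j then 1 else 0) [0..<q]"

lemma sum_list_zero: "sum_list (b::nat list) = 0 \<Longrightarrow> t < length b \<Longrightarrow> b ! t = 0"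
  by (simp add: sum_list_eq_0_iff)

lemma sum1: "sum_list (b::nat list) = 1 \<Longrightarrow> \<exists>j < length b. b = e1 (length b) j"
proof (induction b)
  case Nil then show ?case by simp
next
  case (Cons x b)
  show ?case
  proof (cases x)
    case 0
    then obtain j where "j < length b" "b = e1 (length b) j" using Cons by auto
    then show ?thesis using 0 by (intro exI[of _ "Suc j"]) (simp add: e1_def map_upt_Suc del: upt_Suc)
  next
    case (Suc y)
    then have "y = 0" "sum_list b = 0" using Cons.prems by auto
    then have "b = map (\<lambda>t. if Suc t = 0 then 1 else 0) [0..<length b]"
      by (intro nth_equalityI) (simp_all add: sum_list_zero)
    then show ?thesis using Suc \<open>y = 0\<close> by (intro exI[of _ 0]) (simp add: e1_def map_upt_Suc del: upt_Suc)
  qed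
qed

lemma sum2: "sum_list (b::nat list) = 2 \<Longrightarrow> \<exists>i j. i \<le> j \<and> j < length b \<and> b = vec (length b) i j"
proof (induction b)
  case Nil then show ?case by simp
next
  case (Cons x b)
  have "x + sum_list b = 2" using Cons.prems by simp
  then consider "x = 0" | "x = 1" | "x = 2" by linarith
  then show ?case
  proof cases
    case 1
    then obtain i j where "i \<le> j" "j < length b" "b = vec (length b) i j" using Cons by auto
    then show ?thesis using 1 by (intro exI[of _ "Suc i"] exI[of _ "Suc j"]) (simp add: vec_def map_upt_Suc del: upt_Suc)
  next
    case 2
    then have "sum_list b = 1" using Cons.prems by simp
    then obtain j where "j < length b" "b = e1 (length b) j" using sum1 by blast
    then show ?thesis using 2 by (intro exI[of _ 0] exI[of _ "Suc j"]) (simp add: vec_def e1_def map_upt_Suc del: upt_Suc)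
  next
    case 3
    then have "sum_list b = 0" using Cons.prems by simp
    then have "b = map (\<lambda>t. (if Suc t = 0 then 1 else 0) + (if Suc t = 0 then 1 else 0)) [0..<length b]"
      by (intro nth_equalityI) (simp_all add: sum_list_zero)
    then show ?thesis using 3 by (intro exI[of _ 0] exI[of _ 0]) (simp add: vec_def map_upt_Suc del: upt_Suc)
  qed
qed

lemma vec_len: "length (vec q i j) = q" by (simp add: vec_def)

lemma vec_nth: "t < q \<Longrightarrow> vec q i j ! t = (if t = i then 1 else 0) + (if t = j then 1 else 0)"
  by (simp add: vec_def)

lemma vec_sum_list: "i < q \<Longrightarrow> j < q \<Longrightarrow> sum_list (vec q i j) = 2"
  unfolding vec_def interv_sum_list_conv_sum_set_nat
  by (simp add: sum.distrib)

lemma vec_msum: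
  assumes "i < q" "j < q"
  shows "(\<Sum>t<q. repeat_mset (vec q i j ! t) (R t)) = R i + R j"
proof -
  have "(\<Sum>t<q. repeat_mset (vec q i j ! t) (R t)) = (\<Sum>t<q. (if t = i then R t else {#}) + (if t = j then R t else {#}))"
    by (rule sum.cong) (auto simp: vec_nth repeat_mset_distrib)
  also have "\<dots> = R i + R j" using assms by (simp add: sum.distrib)
  finally show ?thesis .
qed

lemma vec_less:
  assumes "i \<le> j" "j < q" "k < q" "l < q" "min k l < i"
  shows "vec q i j < vec q k l"
proof -
  let ?p = "min k l"
  have p: "?p < q" using assms by simp
  have "take ?p (vec q i j) = take ?p (vec q k l)"
    by (rule nth_equalityI) (use assms in \<open>auto simp: vec_len vec_nth\<close>)
  moreover have "vec q i j ! ?p < vec q k l ! ?p" using assms p by (auto simp: vec_nth min_def)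
  ultimately show ?thesis unfolding list_less_def lexord_take_index_conv
    using p by (auto simp: vec_len)
qed



lemma GJ_eq: "2 \<le> m \<Longrightarrow> GJ m = mset_set ` set (RS m)"
  unfolding GJ_def using RS_set[of m] min_vc_iff by auto

lemma rl_sum:
  "(\<Sum>i<length (rooted_list n). repeat_mset (a ! i) (rooted_list n ! i))
   = (\<Sum>i<length (RS n). repeat_mset (a ! i) (mset_set (RS n ! i)))"
  unfolding RS_rooted by (rule sum.cong) auto

lemma expr_a:
  assumes "a \<in> expressions n M"
  shows "\<exists>i j. i \<le> j \<and> j < length (RS n) \<and> a = vec (length (RS n)) i j
     \<and> M = mset_set (RS n ! i) + mset_set (RS n ! j)"
proof -
  have l: "length a = length (RS n)" and s: "sum_list a = 2"
    and M: "(\<Sum>i<length (RS n). repeat_mset (a ! i) (mset_set (RS n ! i))) = M"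
    using assms unfolding expressions_def rl_sum by (auto simp: RS_rooted)
  obtain i j where ij: "i \<le> j" "j < length a" "a = vec (length a) i j" using sum2[OF s] by blast
  have "M = mset_set (RS n ! i) + mset_set (RS n ! j)"
    using M ij l vec_msum[of i "length (RS n)" j "\<lambda>t. mset_set (RS n ! t)"] by simp
  then show ?thesis using ij l by metis
qed

lemma expr_b:
  assumes "i < length (RS n)" "j < length (RS n)"
  shows "vec (length (RS n)) i j \<in> expressions n (mset_set (RS n ! i) + mset_set (RS n ! j))"
  unfolding expressions_def rl_sum
  using assms vec_msum[of i "length (RS n)" j "\<lambda>t. mset_set (RS n ! t)"]
  by (simp add: RS_rooted vec_len vec_sum_list)

lemma expr_fin: "finite (expressions n M)"
proof -
  let ?q = "length (RS n)"
  have "expressions n M \<subseteq> (\<lambda>(i, j). vec ?q i j) ` ({..<?q} \<times> {..<?q})"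
  proof
    fix a assume "a \<in> expressions n M"
    then obtain i j where "i \<le> j" "j < ?q" "a = vec ?q i j" using expr_a by blast
    then show "a \<in> (\<lambda>(i, j). vec ?q i j) ` ({..<?q} \<times> {..<?q})" by force
  qed
  then show ?thesis using finite_subset by blast
qed

lemma count_ind: "finite S \<Longrightarrow> count (mset_set S) t = ind S t"
  unfolding ind_def by simp

lemma sorted_idx:
  assumes "sorted_wrt colex L" "i < length L" "j < length L" "colex (L ! i) (L ! j)"
  shows "i < j"
proof (rule ccontr)
  assume "\<not> i < j"
  then have "j < i \<or> i = j" by linarith
  then show False
  proof
    assume "j < i"
    then have "colex (L ! j) (L ! i)" using assms(1,2) sorted_wrt_iff_nth_less by blast
    then show False using assms(4) colex_asym by blast
  next
    assume "i = j" then show False using assms(4) colex_irrefl by simp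
  qed
qed

theorem lemma4p5:
  fixes n :: nat and U :: "nat multiset"
  assumes "n \<ge> 2"
    and "U \<in> FJ2 n - GJ2 n"
  shows "\<exists>V \<in> GJ2 n. rooted_gt n V U \<and> V \<subseteq># U"
proof -
  let ?L = "RS n"
  let ?q = "length ?L"
  have UF: "U \<in> FJ2 n" and UG: "U \<notin> GJ2 n" using assms by auto
  let ?P = "\<lambda>N. N \<in> FJ2 n \<and> N \<subset># U"
  obtain N0 where "?P N0" using UF UG unfolding GJ2_def by (auto intro: subset_mset.le_neq_trans)
  then obtain V where PV: "?P V" and Vmin: "\<forall>N. ?P N \<longrightarrow> size V \<le> size N"
    using ex_has_least_nat[of ?P N0 size] by blast
  have VG: "V \<in> GJ2 n"
    unfolding GJ2_def
  proof (intro CollectI conjI ballI impI)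
    show "V \<in> FJ2 n" using PV by blast
  next
    fix N assume N: "N \<in> FJ2 n" "N \<subseteq># V"
    show "N = V"
    proof (rule ccontr)
      assume "N \<noteq> V"
      then have "N \<subset># V" using N by (simp add: subset_mset.le_neq_trans)
      then have "?P N" using N PV by (meson subset_mset.less_trans)
      then show False using Vmin \<open>N \<subset># V\<close> mset_subset_size by (meson leD)
    qed
  qed
  have GJL: "GJ n = mset_set ` set ?L" using GJ_eq assms(1) .
  obtain C D where CD: "C \<in> set ?L" "D \<in> set ?L" and VCD: "V = mset_set C + mset_set D"
    using PV unfolding FJ2_def GJL by blast
  obtain A0 B0 where AB0: "A0 \<in> set ?L" "B0 \<in> set ?L" and UAB0: "U = mset_set A0 + mset_set B0"
    using UF unfolding FJ2_def GJL by blast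
  obtain i0 j0 where "i0 < ?q" "j0 < ?q" "A0 = ?L ! i0" "B0 = ?L ! j0"
    using AB0 by (metis in_set_conv_nth)
  then have "vec ?q i0 j0 \<in> expressions n U" using expr_b UAB0 by metis
  then have ne: "expressions n U \<noteq> {}" by blast
  define b where "b = max_expression n U"
  have bE: "b \<in> expressions n U" unfolding b_def max_expression_def using Max_in[OF expr_fin ne] .
  obtain i j where ij: "i \<le> j" "j < ?q" "b = vec ?q i j" and U: "U = mset_set (?L ! i) + mset_set (?L ! j)"
    using expr_a[OF bE] by blast
  define A where "A = ?L ! i"
  define B where "B = ?L ! j"
  have iq: "i < ?q" using ij by simp
  have "?L ! i \<in> set ?L" "?L ! j \<in> set ?L" using iq ij(2) nth_mem by blast+
  then have mA: "mvc n A" and mB: "mvc n B" unfolding A_def B_def using RS_set[OF assms(1)] by auto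
  have mC: "mvc n C" and mD: "mvc n D" using RS_set assms(1) CD by auto
  have fA: "finite A" "finite B" "finite C" "finite D" using mA mB mC mD mvc_fin by blast+
  have le: "\<forall>t. ind C t + ind D t \<le> ind A t + ind B t"
  proof
    fix t
    have "count V t \<le> count U t" using PV by (meson mset_subset_eq_count subset_mset.less_imp_le)
    then show "ind C t + ind D t \<le> ind A t + ind B t"
      using VCD U fA unfolding A_def[symmetric] B_def[symmetric] by (simp add: count_ind)
  qed
  have nq: "\<exists>t. ind C t + ind D t \<noteq> ind A t + ind B t"
  proof (rule ccontr)
    assume "\<not> ?thesis"
    then have "\<forall>t. count V t = count U t"
      using VCD U fA unfolding A_def[symmetric] B_def[symmetric] by (simp add: count_ind)
    then have "V = U" by (simp add: multiset_eqI)
    then show False using PV by blast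
  qed
  obtain C' D' where C'D': "mvc n C'" "mvc n D'" and sm: "\<forall>t. ind C' t + ind D' t = ind C t + ind D t"
    and cx: "colex C' A"
    using key[OF mA mB mC mD le nq] by blast
  have fC': "finite C'" "finite D'" using C'D' mvc_fin by blast+
  have VC': "V = mset_set C' + mset_set D'"
    using VCD sm fA fC' by (intro multiset_eqI) (simp add: count_ind)
  have "C' \<in> set ?L" "D' \<in> set ?L" using C'D' RS_set assms(1) by auto
  then obtain k l where kl: "k < ?q" "l < ?q" "C' = ?L ! k" "D' = ?L ! l" by (metis in_set_conv_nth)
  have "k < i" using sorted_idx[OF RS_sorted kl(1) iq] cx kl(3) A_def by simp
  then have "min k l < i" by simp
  then have less: "b < vec ?q k l" using vec_less[OF ij(1) ij(2) kl(1) kl(2)] ij(3) by simp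
  have aE: "vec ?q k l \<in> expressions n V" using expr_b[OF kl(1) kl(2)] VC' kl by simp
  have "vec ?q k l \<le> max_expression n V" unfolding max_expression_def using Max_ge[OF expr_fin aE] .
  then have "rooted_gt n V U" unfolding rooted_gt_def b_def[symmetric] using less by simp
  moreover have "V \<subseteq># U" using PV subset_mset.less_imp_le by blast
  ultimately show ?thesis using VG by blast
qed


end
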